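(* Let $\mathfrak{g}$ be a finite-dimensional simple Lie algebra over $\mathbb{C}$ equipped with a $\mathbb{Z}_n$-grading $\mathfrak{g}=\bigoplus_{i\in\mathbb{Z}_n}\mathfrak{g}_i$ (so $[\mathfrak{g}_i,\mathfrak{g}_j]\subseteq\mathfrak{g}_{i+j}$). Let $j\in\mathbb{Z}_n$ and suppose $h\in\mathfrak{g}_j$ is a semisimple element with $[\mathfrak{g}_0,h]=0$. Then $h$ lies in the center of the subalgebra $\mathfrak{g}^{(j)}:=\bigoplus_{m\in\mathbb{Z}}\mathfrak{g}_{mj}$. In particular, if $j$ is a unit in $\mathbb{Z}_n$, then $h=0$.
   Context: $\mathfrak{g}_0$ denotes the grade-zero component, which is a (reductive) Lie subalgebra of $\mathfrak{g}$. The index $mj$ is computed in $\mathbb{Z}_n$. *)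

theory Defs
  imports Complex_Main
begin

definition lie_algebra :: "(complex \<Rightarrow> 'g::ab_group_add \<Rightarrow> 'g) \<Rightarrow> ('g \<Rightarrow> 'g \<Rightarrow> 'g) \<Rightarrow> bool" where
  "lie_algebra sm br \<longleftrightarrow>
     vector_space sm \<and>
     (\<forall>x y z. br (x + y) z = br x z + br y z) \<and>
     (\<forall>x y z. br x (y + z) = br x y + br x z) \<and>
     (\<forall>a x y. br (sm a x) y = sm a (br x y)) \<and>
     (\<forall>a x y. br x (sm a y) = sm a (br x y)) \<and>
     (\<forall>x. br x x = 0) \<and>
     (\<forall>x y z. br x (br y z) + br y (br z x) + br z (br x y) = 0)"

definition finite_dim :: "(complex \<Rightarrow> 'g::ab_group_add \<Rightarrow> 'g) \<Rightarrow> bool" where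
  "finite_dim sm \<longleftrightarrow> (\<exists>B. finite B \<and> module.span sm B = UNIV)"

definition lie_ideal :: "(complex \<Rightarrow> 'g::ab_group_add \<Rightarrow> 'g) \<Rightarrow> ('g \<Rightarrow> 'g \<Rightarrow> 'g) \<Rightarrow> 'g set \<Rightarrow> bool" where
  "lie_ideal sm br I \<longleftrightarrow> module.subspace sm I \<and> (\<forall>x y. y \<in> I \<longrightarrow> br x y \<in> I)"

definition simple_lie_algebra :: "(complex \<Rightarrow> 'g::ab_group_add \<Rightarrow> 'g) \<Rightarrow> ('g \<Rightarrow> 'g \<Rightarrow> 'g) \<Rightarrow> bool" where
  "simple_lie_algebra sm br \<longleftrightarrow> lie_algebra sm br \<and> (\<exists>x y. br x y \<noteq> 0) \<and>
     (\<forall>I. lie_ideal sm br I \<longrightarrow> I = {0} \<or> I = UNIV)"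

definition Zn_grading :: "(complex \<Rightarrow> 'g::ab_group_add \<Rightarrow> 'g) \<Rightarrow> ('g \<Rightarrow> 'g \<Rightarrow> 'g) \<Rightarrow> nat \<Rightarrow> (nat \<Rightarrow> 'g set) \<Rightarrow> bool" where
  "Zn_grading sm br n G \<longleftrightarrow> n \<ge> 1 \<and>
     (\<forall>i<n. module.subspace sm (G i)) \<and>
     (\<forall>x. \<exists>!f. (\<forall>i<n. f i \<in> G i) \<and> (\<forall>i\<ge>n. f i = 0) \<and> x = (\<Sum>i<n. f i)) \<and>
     (\<forall>i<n. \<forall>j<n. \<forall>x\<in>G i. \<forall>y\<in>G j. br x y \<in> G ((i + j) mod n))"

text \<open>Semisimple element: ad h is diagonalizable, i.e. g is spanned by eigenvectors of ad h.\<close>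
definition semisimple_element :: "(complex \<Rightarrow> 'g::ab_group_add \<Rightarrow> 'g) \<Rightarrow> ('g \<Rightarrow> 'g \<Rightarrow> 'g) \<Rightarrow> 'g \<Rightarrow> bool" where
  "semisimple_element sm br h \<longleftrightarrow> module.span sm {x. \<exists>c. br h x = sm c x} = UNIV"

definition graded_sub :: "(complex \<Rightarrow> 'g::ab_group_add \<Rightarrow> 'g) \<Rightarrow> nat \<Rightarrow> (nat \<Rightarrow> 'g set) \<Rightarrow> nat \<Rightarrow> 'g set" where
  "graded_sub sm n G j = module.span sm (\<Union>m. G ((m * j) mod n))"

definition in_center :: "('g::zero \<Rightarrow> 'g \<Rightarrow> 'g) \<Rightarrow> 'g set \<Rightarrow> 'g \<Rightarrow> bool" where
  "in_center br S h \<longleftrightarrow> h \<in> S \<and> (\<forall>y\<in>S. br h y = 0)"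

end

theory Submission imports Defs "HOL-Number_Theory.Cong" begin

fun opl :: "(complex \<Rightarrow> 'g::ab_group_add \<Rightarrow> 'g) \<Rightarrow> ('g \<Rightarrow> 'g) \<Rightarrow> complex list \<Rightarrow> 'g \<Rightarrow> 'g" where
  "opl sm A [] v = v"
| "opl sm A (l#ls) v = A (opl sm A ls v) - sm l (opl sm A ls v)"

locale linop = vector_space sm for sm :: "complex \<Rightarrow> 'g::ab_group_add \<Rightarrow> 'g" +
  fixes A :: "'g \<Rightarrow> 'g"
  assumes Aadd: "A (x + y) = A x + A y" and Asc: "A (sm c x) = sm c (A x)"
begin

lemma A0: "A 0 = 0" using Aadd[of 0 0] by simp
lemma Adiff: "A (x - y) = A x - A y"
  using Aadd[of "x - y" y] by (simp add: algebra_simps)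

lemma opl_add: "opl sm A ls (x + y) = opl sm A ls x + opl sm A ls y"
  by (induction ls) (auto simp: Aadd algebra_simps scale_right_distrib)

lemma opl_diff: "opl sm A ls (x - y) = opl sm A ls x - opl sm A ls y"
  using opl_add[of ls "x - y" y] by (simp add: algebra_simps)

lemma opl_sc: "opl sm A ls (sm c x) = sm c (opl sm A ls x)"
  by (induction ls) (auto simp: Asc scale_right_diff_distrib scale_left_commute)

lemma opl_0: "opl sm A ls 0 = 0"
  using opl_sc[of ls 0 0] by simp

lemma opl_A: "opl sm A ls (A v) = A (opl sm A ls v)"
  by (induction ls) (auto simp: Adiff Asc)

lemma opl_comm: "opl sm A ls (opl sm A ms v) = opl sm A ms (opl sm A ls v)"
  by (induction ls) (auto simp: opl_A opl_diff opl_sc)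

lemma opl_app: "opl sm A (ls @ ms) v = opl sm A ls (opl sm A ms v)"
  by (induction ls) auto

lemma opl_ker: "A u = 0 \<Longrightarrow> opl sm A ls u = sm (\<Prod>l\<leftarrow>ls. - l) u"
  by (induction ls) (auto simp: Asc)

lemma Q_span:
  assumes "z \<in> span {x. \<exists>c. A x = sm c x}"
  shows "\<exists>ls. (\<forall>l\<in>set ls. l \<noteq> 0) \<and> opl sm A ls (A z) = 0"
  using assms
proof (induction rule: span_induct_alt)
  case base
  show ?case by (rule exI[of _ "[]"]) (simp add: A0)
next
  case (step c x y)
  from step(1) obtain d where d: "A x = sm d x" by auto
  from step(2) obtain ls where ls: "\<forall>l\<in>set ls. l \<noteq> 0" "opl sm A ls (A y) = 0" by auto
  define ms where "ms = (if d = 0 then [] else [d])"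
  have ms: "\<forall>l\<in>set ms. l \<noteq> 0" "opl sm A ms (A x) = 0"
    using d by (auto simp: ms_def Asc)
  have "opl sm A (ms @ ls) (A (sm c x + y)) = 0"
    by (simp add: opl_app Aadd Asc opl_add opl_sc ls(2) opl_0 ms(2) opl_comm[of ms ls])
  with ls ms show ?case by (intro exI[of _ "ms @ ls"]) auto
qed

lemma nil2:
  assumes "span {x. \<exists>c. A x = sm c x} = UNIV" and "A (A z) = 0"
  shows "A z = 0"
proof -
  obtain ls where ls: "\<forall>l\<in>set ls. l \<noteq> 0" "opl sm A ls (A z) = 0"
    using Q_span[of z] assms(1) by auto
  have "sm (\<Prod>l\<leftarrow>ls. - l) (A z) = 0" using opl_ker[OF assms(2)] ls(2) by simp
  moreover have "(\<Prod>l\<leftarrow>ls. - l) \<noteq> 0" using ls(1) by (induction ls) auto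
  ultimately show ?thesis by simp
qed

lemma nilk:
  assumes "span {x. \<exists>c. A x = sm c x} = UNIV" and "(A ^^ Suc k) z = 0"
  shows "A z = 0"
  using assms(2)
proof (induction k)
  case 0 then show ?case by simp
next
  case (Suc k)
  have "A (A ((A ^^ k) z)) = 0" using Suc.prems by (simp add: funpow_swap1)
  hence "A ((A ^^ k) z) = 0" by (rule nil2[OF assms(1)])
  thus ?case using Suc.IH by (simp add: funpow_swap1)
qed
end

theorem proposition1p4:
  fixes sm :: "complex \<Rightarrow> 'g::ab_group_add \<Rightarrow> 'g"
    and br :: "'g \<Rightarrow> 'g \<Rightarrow> 'g"
    and n j :: nat and G :: "nat \<Rightarrow> 'g set" and h :: 'g
  assumes "simple_lie_algebra sm br"
    and "finite_dim sm"
    and "Zn_grading sm br n G"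
    and "j < n"
    and "h \<in> G j"
    and "semisimple_element sm br h"
    and "\<forall>x\<in>G 0. br x h = 0"
  shows "in_center br (graded_sub sm n G j) h \<and> (coprime j n \<longrightarrow> h = 0)"
proof -
  have L: "lie_algebra sm br" and nab: "\<exists>x y. br x y \<noteq> 0"
    and simp: "\<And>I. lie_ideal sm br I \<Longrightarrow> I = {0} \<or> I = UNIV"
    using assms(1) unfolding simple_lie_algebra_def by auto
  have V: "vector_space sm" and badd1: "\<And>x y z. br (x + y) z = br x z + br y z"
    and badd2: "\<And>x y z. br x (y + z) = br x y + br x z"
    and bsc1: "\<And>a x y. br (sm a x) y = sm a (br x y)"
    and bsc2: "\<And>a x y. br x (sm a y) = sm a (br x y)"
    and balt: "\<And>x. br x x = 0"
    using L unfolding lie_algebra_def by auto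
  interpret V: vector_space sm by (rule V)
  interpret LA: linop sm "br h"
    by unfold_locales (auto simp: badd2 bsc2)
  have anti: "br x y = - br y x" for x y
  proof -
    have "0 = br (x + y) (x + y)" by (simp add: balt)
    also have "\<dots> = br x x + br x y + (br y x + br y y)" by (simp add: badd1 badd2)
    also have "\<dots> = br x y + br y x" by (simp add: balt)
    finally have "br x y + br y x = 0" by simp
    thus ?thesis by (simp add: eq_neg_iff_add_eq_0)
  qed
  have b0l: "br 0 y = 0" for y using badd1[of 0 0 y] by simp
  have n1: "n \<ge> 1" and sub: "\<And>i. i < n \<Longrightarrow> V.subspace (G i)"
    and dec: "\<And>x. \<exists>!f. (\<forall>i<n. f i \<in> G i) \<and> (\<forall>i\<ge>n. f i = 0) \<and> x = (\<Sum>i<n. f i)"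
    and gr: "\<And>i j x y. i < n \<Longrightarrow> j < n \<Longrightarrow> x \<in> G i \<Longrightarrow> y \<in> G j \<Longrightarrow> br x y \<in> G ((i + j) mod n)"
    using assms(3) unfolding Zn_grading_def by auto
  have ss: "V.span {x. \<exists>c. br h x = sm c x} = UNIV"
    using assms(6) unfolding semisimple_element_def by simp
  have pow: "((br h) ^^ k) y \<in> G ((i + k * j) mod n)" if "i < n" "y \<in> G i" for i k y
  proof (induction k)
    case 0 thus ?case using that by simp
  next
    case (Suc k)
    have "br h (((br h) ^^ k) y) \<in> G ((j + (i + k * j) mod n) mod n)"
      using gr[OF assms(4) _ assms(5) Suc] n1 by auto
    moreover have "(j + (i + k * j) mod n) mod n = (i + Suc k * j) mod n"
      by (simp add: mod_add_right_eq add_ac)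
    ultimately show ?case by simp
  qed
  have kill: "br h y = 0" if "y \<in> G ((m * j) mod n)" for m y
  proof -
    define k where "k = (n - 1) * m"
    have "((br h) ^^ k) y \<in> G ((m * j mod n + k * j) mod n)"
      using pow[OF _ that] n1 by auto
    moreover have "(m * j mod n + k * j) mod n = 0"
    proof -
      have "(m * j mod n + k * j) mod n = (m * j + k * j) mod n" by (simp add: mod_add_left_eq)
      also have "m * j + k * j = (1 + (n - 1)) * (m * j)" unfolding k_def
        by (simp only: add_mult_distrib mult.assoc mult_1)
      also have "1 + (n - 1) = n" using n1 by simp
      finally show ?thesis by simp
    qed
    ultimately have "((br h) ^^ k) y \<in> G 0" by simp
    hence "br (((br h) ^^ k) y) h = 0" using assms(7) by auto
    hence "br h (((br h) ^^ k) y) = 0" using anti[of h "((br h) ^^ k) y"] by simp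
    hence "((br h) ^^ Suc k) y = 0" by simp
    thus ?thesis using LA.nilk[OF ss] by blast
  qed
  have cent: "\<forall>y\<in>graded_sub sm n G j. br h y = 0"
  proof
    fix y assume "y \<in> graded_sub sm n G j"
    hence "y \<in> V.span (\<Union>m. G ((m * j) mod n))" by (simp add: graded_sub_def)
    thus "br h y = 0"
    proof (induction rule: V.span_induct_alt)
      case base thus ?case by (rule LA.A0)
    next
      case (step c x y) thus ?case using kill by (auto simp: badd2 bsc2)
    qed
  qed
  have hin: "h \<in> graded_sub sm n G j"
    unfolding graded_sub_def
    by (rule V.span_base) (use assms(4,5) in \<open>auto intro!: exI[of _ 1]\<close>)
  have part2: "h = 0" if cop: "coprime j n"
  proof -
    obtain u where u: "[j * u = Suc 0] (mod n)" using cong_solve_coprime_nat[OF cop] by auto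
    have Gi: "G i \<subseteq> graded_sub sm n G j" if "i < n" for i
    proof -
      have "(u * i * j) mod n = i"
      proof -
        have "(u * i * j) mod n = (i * ((j * u) mod n)) mod n" by (simp add: mod_mult_right_eq ac_simps)
        also have "\<dots> = (i * (Suc 0 mod n)) mod n" using u by (simp add: cong_def)
        also have "\<dots> = i" using that by (simp add: mod_mult_right_eq)
        finally show ?thesis .
      qed
      thus ?thesis unfolding graded_sub_def by (auto intro!: V.span_base exI[of _ "u * i"])
    qed
    have all: "br h y = 0" for y
    proof -
      obtain f where f: "\<forall>i<n. f i \<in> G i" "y = (\<Sum>i<n. f i)" using dec[of y] by auto
      have "y \<in> graded_sub sm n G j"
        unfolding f(2) graded_sub_def
        by (rule V.span_sum) (use Gi f(1) in \<open>auto simp: graded_sub_def\<close>)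
      thus ?thesis using cent by auto
    qed
    define Z where "Z = {x. \<forall>y. br x y = 0}"
    have "lie_ideal sm br Z"
      unfolding lie_ideal_def V.subspace_def
    proof (intro conjI allI impI ballI)
      show "0 \<in> Z" unfolding Z_def using b0l by auto
      show "x + y \<in> Z" if "x \<in> Z" "y \<in> Z" for x y
        using that unfolding Z_def by (simp add: badd1)
      show "sm c x \<in> Z" if "x \<in> Z" for c x
        using that unfolding Z_def by (simp add: bsc1)
      show "br x y \<in> Z" if "y \<in> Z" for x y
      proof -
        have "br y x = 0" using that unfolding Z_def by simp
        hence "br x y = 0" using anti[of x y] by simp
        thus ?thesis unfolding Z_def using b0l by simp
      qed
    qed
    hence "Z = {0} \<or> Z = UNIV" by (rule simp)
    moreover have "Z \<noteq> UNIV" using nab unfolding Z_def by auto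
    moreover have "h \<in> Z" using all unfolding Z_def by auto
    ultimately show ?thesis by auto
  qed
  show ?thesis using cent hin part2 unfolding in_center_def by auto
qed

end
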